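(* For every $n \in \mathbb{N}$, the SquaredEquality formula $EQ^2(n)$ has a QRAT refutation of size $\mathcal{O}(n^2)$.
   Context: A QBF is in closed prenex CNF form $Q.\phi$, where $Q = Q_1X_1\dots Q_kX_k$ is a quantifier prefix with $Q_i\in\{\exists,\forall\}$ and $\phi$ is a CNF (a set of clauses, each a disjunction of literals). For literals $\ell,k$, write $k \le_Q \ell$ if the variable of $k$ is quantified in a block at or to the left of the block of $\ell$. The $n$-th SquaredEquality formula is $EQ^2(n) := Q(n).eq^2(n)$ with prefix $Q(n) := \exists\{x_1,y_1,\dots,x_n,y_n\}\,\forall\{u_1,v_1,\dots,u_n,v_n\}\,\exists\{t_{i,j} : i,j\in[n]\}$ and matrix $eq^2(n)$ consisting of the clauses $\{x_i,y_j,u_i,v_j,t_{i,j}\}$, $\{x_i,\overline{y_j},u_i,\overline{v_j},t_{i,j}\}$, $\{\overline{x_i},y_j,\overline{u_i},v_j,t_{i,j}\}$, $\{\overline{x_i},\overline{y_j},\overline{u_i},\overline{v_j},t_{i,j}\}$ for all $i,j\in[n]$, together with the single clause $(\overline{t_{i,j}} : i,j\in[n])$ (the disjunction of all $\overline{t_{i,j}}$). QRAT proof system. Unit propagation on a CNF $F$: repeatedly, for a unit clause $(\ell)$, remove all clauses containing $\ell$ and delete $\overline{\ell}$ from all clauses, until no unit clause remains or the empty clause is derived. A clause $C$ is an asymmetric tautology (AT) w.r.t. $\phi$ (and w.r.t. $Q.\phi$) if unit propagation on $\phi \wedge \overline{C}$ (where $\overline{C}$ is the conjunction of the negations of the literals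 of $C$) derives the empty clause. For clauses $C\vee\ell$ and $D\vee\overline{\ell}$, the outer resolvent is $OR(Q,C,D,\ell) := C \cup \{k \in D : k \le_Q \ell\}$. A clause $C\vee \ell$ is a QRAT-clause on literal $\ell$ (and $\ell$ is a QRAT-literal in it) w.r.t. $Q.\phi$ if for every clause $D\vee\overline{\ell}\in\phi$ the outer resolvent $OR(Q,C,D,\ell)$ is an AT w.r.t. $\phi$. Extended inner clause $EIC(Q,C,\ell)$ for a universal $\ell\in C\in\phi$: repeatedly, for every existential literal $k$ of the current clause quantified to the right of $\ell$, add to the clause all literals quantified to the right of $\ell$ (and $\overline{\ell}$ if present) occurring in clauses $D\in\phi$ with $\overline{k}\in D$. A QRAT derivation from $Q.\phi$ is a sequence of modifications of the current formula, each being one of: adding a clause that is an AT or has an existential QRAT-literal w.r.t. the current formula (QRATA); deleting any clause; deleting a universal literal $\ell$ from a clause $C$ when $\ell$ is a QRAT-literal in $C$ (QRATU); deleting a universal literal $\ell$ from a clause $C$ when $\overline{\ell}\notin EIC(Q,C,\ell)$ (EUR). A QRAT refutation is such a derivation that produces the empty clause $\bot$; its size is the number of steps (equivalently, total size of the clauses produced). *)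

theory Defs
  imports Main
begin

datatype 'v lit = Pos 'v | Neg 'v

fun var :: "'v lit \<Rightarrow> 'v" where
  "var (Pos v) = v" | "var (Neg v) = v"

fun neg :: "'v lit \<Rightarrow> 'v lit" where
  "neg (Pos v) = Neg v" | "neg (Neg v) = Pos v"

type_synonym 'v clause = "'v lit set"
type_synonym 'v cnf = "'v clause set"

datatype quant = Exists | Forall

type_synonym 'v prefix = "(quant \<times> 'v set) list"

definition prefix_vars :: "'v prefix \<Rightarrow> 'v set" where
  "prefix_vars Q = (\<Union>b\<in>set Q. snd b)"

definition blk :: "'v prefix \<Rightarrow> 'v \<Rightarrow> nat" where
  "blk Q v = (LEAST i. i < length Q \<and> v \<in> snd (Q ! i))"

definition is_exist :: "'v prefix \<Rightarrow> 'v \<Rightarrow> bool" where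
  "is_exist Q v \<longleftrightarrow> v \<in> prefix_vars Q \<and> fst (Q ! blk Q v) = Exists"

definition is_univ :: "'v prefix \<Rightarrow> 'v \<Rightarrow> bool" where
  "is_univ Q v \<longleftrightarrow> v \<in> prefix_vars Q \<and> fst (Q ! blk Q v) = Forall"

definition leQ :: "'v prefix \<Rightarrow> 'v lit \<Rightarrow> 'v lit \<Rightarrow> bool" where
  "leQ Q k l \<longleftrightarrow> blk Q (var k) \<le> blk Q (var l)"

definition cnf_vars :: "'v cnf \<Rightarrow> 'v set" where
  "cnf_vars F = var ` (\<Union>F)"

definition assign_lit :: "'v cnf \<Rightarrow> 'v lit \<Rightarrow> 'v cnf" where
  "assign_lit F l = {C - {neg l} | C. C \<in> F \<and> l \<notin> C}"

inductive up_refutes :: "'v cnf \<Rightarrow> bool" where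
  empty: "{} \<in> F \<Longrightarrow> up_refutes F"
| unit: "{l} \<in> F \<Longrightarrow> up_refutes (assign_lit F l) \<Longrightarrow> up_refutes F"

definition neg_clause :: "'v clause \<Rightarrow> 'v cnf" where
  "neg_clause C = {{neg l} | l. l \<in> C}"

definition AT :: "'v cnf \<Rightarrow> 'v clause \<Rightarrow> bool" where
  "AT F C \<longleftrightarrow> up_refutes (F \<union> neg_clause C)"

definition outer_res :: "'v prefix \<Rightarrow> 'v clause \<Rightarrow> 'v clause \<Rightarrow> 'v lit \<Rightarrow> 'v clause" where
  "outer_res Q C D l = C \<union> {k \<in> D. leQ Q k l}"

definition qrat_lit :: "'v prefix \<Rightarrow> 'v cnf \<Rightarrow> 'v clause \<Rightarrow> 'v lit \<Rightarrow> bool" where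
  "qrat_lit Q F C' l \<longleftrightarrow> l \<in> C' \<and>
     (\<forall>D'\<in>F. neg l \<in> D' \<longrightarrow> AT F (outer_res Q (C' - {l}) (D' - {neg l}) l))"

inductive_set EIC :: "'v prefix \<Rightarrow> 'v cnf \<Rightarrow> 'v clause \<Rightarrow> 'v lit \<Rightarrow> 'v lit set"
  for Q F C l where
  base: "k \<in> C \<Longrightarrow> k \<in> EIC Q F C l"
| step: "\<lbrakk> k \<in> EIC Q F C l; is_exist Q (var k); blk Q (var k) > blk Q (var l);
           D \<in> F; neg k \<in> D; m \<in> D; blk Q (var m) > blk Q (var l) \<or> m = neg l \<rbrakk>
         \<Longrightarrow> m \<in> EIC Q F C l"

inductive qrat_step :: "'v prefix \<Rightarrow> 'v cnf \<Rightarrow> 'v cnf \<Rightarrow> bool" for Q where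
  QRATA: "\<lbrakk> finite C; var ` C \<subseteq> prefix_vars Q;
            AT F C \<or> (\<exists>l\<in>C. is_exist Q (var l) \<and> qrat_lit Q F C l) \<rbrakk>
          \<Longrightarrow> qrat_step Q F (F \<union> {C})"
| Delete: "C \<in> F \<Longrightarrow> qrat_step Q F (F - {C})"
| QRATU: "\<lbrakk> C \<in> F; l \<in> C; is_univ Q (var l); qrat_lit Q F C l \<rbrakk>
          \<Longrightarrow> qrat_step Q F ((F - {C}) \<union> {C - {l}})"
| EUR: "\<lbrakk> C \<in> F; l \<in> C; is_univ Q (var l); neg l \<notin> EIC Q F C l \<rbrakk>
          \<Longrightarrow> qrat_step Q F ((F - {C}) \<union> {C - {l}})"

definition qrat_refutation :: "'v prefix \<Rightarrow> 'v cnf \<Rightarrow> 'v cnf list \<Rightarrow> bool" where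
  "qrat_refutation Q F Fs \<longleftrightarrow> Fs \<noteq> [] \<and> hd Fs = F \<and>
     (\<forall>i. Suc i < length Fs \<longrightarrow> qrat_step Q (Fs ! i) (Fs ! Suc i)) \<and>
     {} \<in> last Fs"

definition refutation_size :: "'v cnf list \<Rightarrow> nat" where
  "refutation_size Fs = length Fs - 1"

datatype eqvar = X nat | Y nat | U nat | V nat | T nat nat

definition eq2_prefix :: "nat \<Rightarrow> eqvar prefix" where
  "eq2_prefix n =
    [ (Exists, {X i | i. i \<in> {1..n}} \<union> {Y i | i. i \<in> {1..n}}),
      (Forall, {U i | i. i \<in> {1..n}} \<union> {V i | i. i \<in> {1..n}}),
      (Exists, {T i j | i j. i \<in> {1..n} \<and> j \<in> {1..n}}) ]"

definition eq2_matrix :: "nat \<Rightarrow> eqvar cnf" where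
  "eq2_matrix n =
    (\<Union>i\<in>{1..n}. \<Union>j\<in>{1..n}.
      { {Pos (X i), Pos (Y j), Pos (U i), Pos (V j), Pos (T i j)},
        {Pos (X i), Neg (Y j), Pos (U i), Neg (V j), Pos (T i j)},
        {Neg (X i), Pos (Y j), Neg (U i), Pos (V j), Pos (T i j)},
        {Neg (X i), Neg (Y j), Neg (U i), Neg (V j), Pos (T i j)} })
    \<union> { {Neg (T i j) | i j. i \<in> {1..n} \<and> j \<in> {1..n}} }"

end

theory Submission
  imports Defs
begin

fun lt :: "bool \<Rightarrow> 'v \<Rightarrow> 'v lit" where
  "lt True v = Pos v" | "lt False v = Neg v"

lemma neg_lt[simp]: "neg (lt a v) = lt (\<not>a) v" by (cases a) auto
lemma var_lt[simp]: "var (lt a v) = v" by (cases a) auto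
lemma lt_eq[simp]: "lt a v = lt b w \<longleftrightarrow> a = b \<and> v = w" by (cases a; cases b) auto
lemma lt_Pos[simp]: "lt a v = Pos w \<longleftrightarrow> a \<and> v = w" "Pos w = lt a v \<longleftrightarrow> a \<and> v = w"
  by (cases a; auto)+
lemma lt_Neg[simp]: "lt a v = Neg w \<longleftrightarrow> \<not>a \<and> v = w" "Neg w = lt a v \<longleftrightarrow> \<not>a \<and> v = w"
  by (cases a; auto)+
lemma neg_neg[simp]: "neg (neg l) = l" by (cases l) auto

lemma mem_assign: "C \<in> F \<Longrightarrow> l \<notin> C \<Longrightarrow> D = C - {neg l} \<Longrightarrow> D \<in> assign_lit F l"
  unfolding assign_lit_def by blast

lemma AT_taut:
  assumes "lt a x \<in> C" "lt (\<not>a) x \<in> C"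
  shows "AT F C"
proof -
  let ?G = "F \<union> neg_clause C"
  have 1: "{lt a x} \<in> ?G" using assms(2) unfolding neg_clause_def
    by (auto intro!: exI[of _ "lt (\<not>a) x"])
  have 2: "{lt (\<not>a) x} \<in> ?G" using assms(1) unfolding neg_clause_def
    by (auto intro!: exI[of _ "lt a x"])
  have "{} \<in> assign_lit ?G (lt a x)"
    by (rule mem_assign[OF 2]) auto
  then show ?thesis unfolding AT_def
    using up_refutes.unit[OF 1] up_refutes.empty by blast
qed

lemma up_units:
  "finite L \<Longrightarrow> \<forall>l\<in>L. {l} \<in> F \<Longrightarrow> D \<in> F \<Longrightarrow> D \<subseteq> neg ` L \<Longrightarrow> \<forall>l\<in>L. neg l \<notin> L
   \<Longrightarrow> up_refutes F"
proof (induction L arbitrary: F D rule: finite_induct)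
  case empty
  then show ?case using up_refutes.empty by auto
next
  case (insert l L)
  let ?F = "assign_lit F l"
  have u: "{l} \<in> F" using insert by auto
  have a: "\<forall>l'\<in>L. {l'} \<in> ?F"
  proof
    fix l' assume "l' \<in> L"
    then have "l' \<noteq> l" "l' \<noteq> neg l" using insert by auto
    then show "{l'} \<in> ?F" using insert \<open>l' \<in> L\<close> by (intro mem_assign[of "{l'}"]) auto
  qed
  have "l \<notin> D"
  proof
    assume "l \<in> D"
    then obtain m where "m \<in> insert l L" "l = neg m" using insert by auto
    then have "neg l \<in> insert l L" by simp
    then show False using insert by auto
  qed
  then have b: "D - {neg l} \<in> ?F" using insert by (intro mem_assign) auto
  have c: "D - {neg l} \<subseteq> neg ` L" using insert by auto
  have "up_refutes ?F" using insert.IH[OF a b c] insert by auto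
  then show ?case using up_refutes.unit[OF u] by blast
qed

lemma prefix_vars_eq2: "prefix_vars (eq2_prefix n) =
   {X i | i. i \<in> {1..n}} \<union> {Y i | i. i \<in> {1..n}} \<union>
   {U i | i. i \<in> {1..n}} \<union> {V i | i. i \<in> {1..n}} \<union>
   {T i j | i j. i \<in> {1..n} \<and> j \<in> {1..n}}"
  unfolding prefix_vars_def eq2_prefix_def by auto

lemma blkX: "blk (eq2_prefix n) (X i) = 0 \<or> i \<notin> {1..n}"
  unfolding blk_def eq2_prefix_def by auto

lemma blkX': "i \<in> {1..n} \<Longrightarrow> blk (eq2_prefix n) (X i) = 0"
  using blkX by blast

lemma blkY': "i \<in> {1..n} \<Longrightarrow> blk (eq2_prefix n) (Y i) = 0"
  unfolding blk_def eq2_prefix_def by auto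

lemma blkU': "i \<in> {1..n} \<Longrightarrow> blk (eq2_prefix n) (U i) = 1"
  unfolding blk_def eq2_prefix_def
  by (rule Least_equality) (auto simp: less_Suc_eq)

lemma blkV': "i \<in> {1..n} \<Longrightarrow> blk (eq2_prefix n) (V i) = 1"
  unfolding blk_def eq2_prefix_def
  by (rule Least_equality) (auto simp: less_Suc_eq)

lemma univU: "i \<in> {1..n} \<Longrightarrow> is_univ (eq2_prefix n) (U i)"
  unfolding is_univ_def by (simp add: blkU' prefix_vars_eq2) (simp add: eq2_prefix_def)

lemma univV: "i \<in> {1..n} \<Longrightarrow> is_univ (eq2_prefix n) (V i)"
  unfolding is_univ_def by (simp add: blkV' prefix_vars_eq2) (simp add: eq2_prefix_def)


lemma stepU:
  assumes "C \<in> F" "lt a (U i) \<in> C" "lt a (X i) \<in> C" "i \<in> {1..n}"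
    "\<forall>D\<in>F. \<forall>a. lt a (U i) \<in> D \<longrightarrow> lt a (X i) \<in> D"
  shows "qrat_step (eq2_prefix n) F (F - {C} \<union> {C - {lt a (U i)}})"
proof (rule qrat_step.QRATU)
  show "is_univ (eq2_prefix n) (var (lt a (U i)))" using univU assms by simp
  show "qrat_lit (eq2_prefix n) F C (lt a (U i))"
    unfolding qrat_lit_def
  proof (intro conjI ballI impI)
    fix D' assume "D' \<in> F" "neg (lt a (U i)) \<in> D'"
    then have "lt (\<not>a) (X i) \<in> D'" using assms(5) by auto
    moreover have "leQ (eq2_prefix n) (lt (\<not>a) (X i)) (lt a (U i))"
      unfolding leQ_def using blkX' assms(4) by simp
    ultimately show "AT F (outer_res (eq2_prefix n) (C - {lt a (U i)}) (D' - {neg (lt a (U i))}) (lt a (U i)))"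
      using assms(3) by (intro AT_taut[of a "X i"]) (auto simp: outer_res_def)
  qed (use assms in auto)
qed (use assms in auto)

lemma stepV:
  assumes "C \<in> F" "lt a (V i) \<in> C" "lt a (Y i) \<in> C" "i \<in> {1..n}"
    "\<forall>D\<in>F. \<forall>a. lt a (V i) \<in> D \<longrightarrow> lt a (Y i) \<in> D"
  shows "qrat_step (eq2_prefix n) F (F - {C} \<union> {C - {lt a (V i)}})"
proof (rule qrat_step.QRATU)
  show "is_univ (eq2_prefix n) (var (lt a (V i)))" using univV assms by simp
  show "qrat_lit (eq2_prefix n) F C (lt a (V i))"
    unfolding qrat_lit_def
  proof (intro conjI ballI impI)
    fix D' assume "D' \<in> F" "neg (lt a (V i)) \<in> D'"
    then have "lt (\<not>a) (Y i) \<in> D'" using assms(5) by auto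
    moreover have "leQ (eq2_prefix n) (lt (\<not>a) (Y i)) (lt a (V i))"
      unfolding leQ_def using blkY' assms(4) by simp
    ultimately show "AT F (outer_res (eq2_prefix n) (C - {lt a (V i)}) (D' - {neg (lt a (V i))}) (lt a (V i)))"
      using assms(3) by (intro AT_taut[of a "Y i"]) (auto simp: outer_res_def)
  qed (use assms in auto)
qed (use assms in auto)

definition full :: "nat \<times> nat \<times> bool \<times> bool \<Rightarrow> eqvar clause" where
  "full = (\<lambda>(i,j,a,b). {lt a (X i), lt b (Y j), lt a (U i), lt b (V j), Pos (T i j)})"
definition red1 :: "nat \<times> nat \<times> bool \<times> bool \<Rightarrow> eqvar clause" where
  "red1 = (\<lambda>(i,j,a,b). {lt a (X i), lt b (Y j), lt b (V j), Pos (T i j)})"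
definition red2 :: "nat \<times> nat \<times> bool \<times> bool \<Rightarrow> eqvar clause" where
  "red2 = (\<lambda>(i,j,a,b). {lt a (X i), lt b (Y j), Pos (T i j)})"
definition Idx :: "nat \<Rightarrow> (nat \<times> nat \<times> bool \<times> bool) set" where
  "Idx n = {1..n} \<times> {1..n} \<times> UNIV \<times> UNIV"
definition Big :: "nat \<Rightarrow> eqvar clause" where
  "Big n = {Neg (T i j) | i j. i \<in> {1..n} \<and> j \<in> {1..n}}"

lemma full_app[simp]: "full (i,j,a,b) = {lt a (X i), lt b (Y j), lt a (U i), lt b (V j), Pos (T i j)}"
  by (simp add: full_def)
lemma red1_app[simp]: "red1 (i,j,a,b) = {lt a (X i), lt b (Y j), lt b (V j), Pos (T i j)}"
  by (simp add: red1_def)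
lemma red2_app[simp]: "red2 (i,j,a,b) = {lt a (X i), lt b (Y j), Pos (T i j)}"
  by (simp add: red2_def)

lemma matrix_eq: "eq2_matrix n = full ` Idx n \<union> {Big n}"
proof -
  have "full ` Idx n = (\<Union>i\<in>{1..n}. \<Union>j\<in>{1..n}.
      { {Pos (X i), Pos (Y j), Pos (U i), Pos (V j), Pos (T i j)},
        {Pos (X i), Neg (Y j), Pos (U i), Neg (V j), Pos (T i j)},
        {Neg (X i), Pos (Y j), Neg (U i), Pos (V j), Pos (T i j)},
        {Neg (X i), Neg (Y j), Neg (U i), Neg (V j), Pos (T i j)} })" (is "?A = ?B")
  proof
    show "?A \<subseteq> ?B"
    proof
      fix x assume "x \<in> ?A"
      then obtain i j a b where "x = full (i,j,a,b)" "(i,j,a,b) \<in> Idx n" by auto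
      then have ij: "i \<in> {1..n}" "j \<in> {1..n}" and x: "x = full (i,j,a,b)" unfolding Idx_def by auto
      have "full (i,j,a,b) \<in> { {Pos (X i), Pos (Y j), Pos (U i), Pos (V j), Pos (T i j)},
        {Pos (X i), Neg (Y j), Pos (U i), Neg (V j), Pos (T i j)},
        {Neg (X i), Pos (Y j), Neg (U i), Pos (V j), Pos (T i j)},
        {Neg (X i), Neg (Y j), Neg (U i), Neg (V j), Pos (T i j)} }"
        by (cases a; cases b) simp_all
      then show "x \<in> ?B" using ij x by blast
    qed
    show "?B \<subseteq> ?A"
    proof
      fix x assume "x \<in> ?B"
      then obtain i j where ij: "i \<in> {1..n}" "j \<in> {1..n}" and
        x: "x = full (i,j,True,True) \<or> x = full (i,j,True,False) \<or>
            x = full (i,j,False,True) \<or> x = full (i,j,False,False)"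
        by auto
      have "(i,j,a,b) \<in> Idx n" for a b using ij unfolding Idx_def by auto
      then show "x \<in> ?A" using x by blast
    qed
  qed
  then show ?thesis unfolding eq2_matrix_def Big_def by simp
qed


definition F1 :: "nat \<Rightarrow> (nat \<times> nat \<times> bool \<times> bool) set \<Rightarrow> eqvar cnf" where
  "F1 n S = full ` (Idx n - S) \<union> red2 ` S \<union> {Big n}"

lemma full_inj: "full p = full q \<longleftrightarrow> p = q"
proof
  assume h: "full p = full q"
  obtain i j a b where p: "p = (i,j,a,b)" by (cases p) auto
  obtain i' j' a' b' where q: "q = (i',j',a',b')" by (cases q) auto
  have "lt a (U i) \<in> full q" "lt b (V j) \<in> full q" using h p by auto
  then show "p = q" using p q by auto
qed simp

lemma Big_noU: "lt a (U i) \<notin> Big n" "lt a (V i) \<notin> Big n" "lt a (X i) \<notin> Big n"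
  "Pos (T i j) \<notin> Big n"
  unfolding Big_def by auto

lemma phase1_step:
  assumes q: "q \<in> Idx n" "q \<notin> S" and S: "S \<subseteq> Idx n"
  shows "(qrat_step (eq2_prefix n) ^^ 2) (F1 n S) (F1 n (insert q S))"
proof -
  obtain i j a b where qd: "q = (i,j,a,b)" by (cases q) auto
  have ij: "i \<in> {1..n}" "j \<in> {1..n}" using q qd unfolding Idx_def by auto
  let ?Q = "eq2_prefix n"
  let ?H = "F1 n S - {full q} \<union> {red1 q}"
  have inF: "full q \<in> F1 n S" using q unfolding F1_def by auto
  have s1: "qrat_step ?Q (F1 n S) (F1 n S - {full q} \<union> {full q - {lt a (U i)}})"
  proof (rule stepU[of _ _ a i])
    show "\<forall>D\<in>F1 n S. \<forall>a. lt a (U i) \<in> D \<longrightarrow> lt a (X i) \<in> D"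
      unfolding F1_def using Big_noU by auto
  qed (use inF qd ij in auto)
  have e1: "full q - {lt a (U i)} = red1 q" using qd by auto
  have inH: "red1 q \<in> ?H" by simp
  have s2: "qrat_step ?Q ?H (?H - {red1 q} \<union> {red1 q - {lt b (V j)}})"
  proof (rule stepV[of _ _ b j])
    show "\<forall>D\<in>?H. \<forall>a. lt a (V j) \<in> D \<longrightarrow> lt a (Y j) \<in> D"
      unfolding F1_def using Big_noU qd by auto
  qed (use qd ij in auto)
  have e2: "red1 q - {lt b (V j)} = red2 q" using qd by auto
  have r1: "red1 q \<notin> F1 n S"
  proof
    assume "red1 q \<in> F1 n S"
    then consider q' where "red1 q = full q'" | q' where "red1 q = red2 q'" | "red1 q = Big n"
      unfolding F1_def by auto
    then show False
    proof cases
      case (1 q')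
      obtain i' j' a' b' where "q' = (i',j',a',b')" by (cases q') auto
      then have "lt a' (U i') \<in> red1 q" using 1 by simp
      then show False using qd by simp
    next
      case (2 q')
      obtain i' j' a' b' where "q' = (i',j',a',b')" by (cases q') auto
      moreover have "lt b (V j) \<in> red2 q'" using 2 qd by (metis insertI1 insertI2 red1_app)
      ultimately show False by simp
    next
      case 3
      have "lt a (X i) \<in> red1 q" using qd by simp
      then show False using 3 Big_noU by simp
    qed
  qed
  have "?H - {red1 q} = F1 n S - {full q}" using r1 by auto
  also have "\<dots> = full ` (Idx n - insert q S) \<union> red2 ` S \<union> {Big n}"
  proof -
    have "full q \<noteq> red2 q'" for q'
    proof
      assume h: "full q = red2 q'"
      obtain i' j' a' b' where "q' = (i',j',a',b')" by (cases q') auto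
      moreover have "lt a (U i) \<in> full q" using qd by simp
      ultimately show False using h by simp
    qed
    then have "full q \<notin> red2 ` S" by auto
    moreover have "full q \<noteq> Big n"
    proof
      assume "full q = Big n"
      moreover have "lt a (U i) \<in> full q" using qd by simp
      ultimately show False using Big_noU by simp
    qed
    moreover have "full ` (Idx n - S) - {full q} = full ` (Idx n - insert q S)"
    proof -
      have inj: "inj full" using full_inj by (intro injI) blast
      have "Idx n - insert q S = (Idx n - S) - {q}" by auto
      then show ?thesis using image_set_diff[OF inj, of "Idx n - S" "{q}"] by simp
    qed
    ultimately show ?thesis unfolding F1_def by auto
  qed
  finally have "?H - {red1 q} \<union> {red1 q - {lt b (V j)}} = F1 n (insert q S)"
    using e2 unfolding F1_def by auto
  then have s2': "qrat_step ?Q ?H (F1 n (insert q S))" using s2 by simp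
  have s1': "qrat_step ?Q (F1 n S) ?H" using s1 e1 by simp
  have "(qrat_step ?Q ^^ Suc (Suc 0)) (F1 n S) (F1 n (insert q S))"
    using s1' s2' by (metis relpowp_Suc_I relpowp_0_I)
  then show ?thesis by (simp add: numeral_2_eq_2)
qed

lemma phase1:
  "finite S \<Longrightarrow> S \<subseteq> Idx n \<Longrightarrow> (qrat_step (eq2_prefix n) ^^ (2 * card S)) (F1 n {}) (F1 n S)"
proof (induction S rule: finite_induct)
  case empty
  then show ?case by simp
next
  case (insert q S)
  have "(qrat_step (eq2_prefix n) ^^ (2 * card S + 2)) (F1 n {}) (F1 n (insert q S))"
  proof -
    have "((qrat_step (eq2_prefix n) ^^ (2 * card S)) OO (qrat_step (eq2_prefix n) ^^ 2)) (F1 n {}) (F1 n (insert q S))"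
      using insert phase1_step[of q n S] by auto
    then show ?thesis by (simp only: relpowp_add)
  qed
  then show ?case using insert by simp
qed


lemma neg_clause_insert: "neg_clause (insert a C) = insert {neg a} (neg_clause C)"
  unfolding neg_clause_def by auto
lemma neg_clause_empty: "neg_clause {} = {}"
  unfolding neg_clause_def by auto

lemma AT1:
  assumes "{Pos (X i), Pos (Y j), Pos (T i j)} \<in> G" "{Pos (X i), Neg (Y j), Pos (T i j)} \<in> G"
  shows "AT G {Pos (X i), Pos (T i j)}"
proof -
  let ?G0 = "G \<union> neg_clause {Pos (X i), Pos (T i j)}"
  have n: "neg_clause {Pos (X i), Pos (T i j)} = {{Neg (X i)}, {Neg (T i j)}}"
    by (simp add: neg_clause_insert neg_clause_empty)
  let ?G1 = "assign_lit ?G0 (Neg (X i))"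
  let ?G2 = "assign_lit ?G1 (Neg (T i j))"
  let ?G3 = "assign_lit ?G2 (Pos (Y j))"
  have "{} \<in> ?G3"
  proof (rule mem_assign)
    show "{Neg (Y j)} \<in> ?G2"
    proof (rule mem_assign)
      show "{Neg (Y j), Pos (T i j)} \<in> ?G1" by (rule mem_assign[where C="{Pos (X i), Neg (Y j), Pos (T i j)}"]) (use assms in auto)
    qed auto
  qed auto
  then have "up_refutes ?G3" by (rule up_refutes.empty)
  moreover have "{Pos (Y j)} \<in> ?G2"
  proof (rule mem_assign)
    show "{Pos (Y j), Pos (T i j)} \<in> ?G1" by (rule mem_assign[where C="{Pos (X i), Pos (Y j), Pos (T i j)}"]) (use assms in auto)
  qed auto
  ultimately have "up_refutes ?G2" by (rule up_refutes.unit[rotated])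
  moreover have "{Neg (T i j)} \<in> ?G1" by (rule mem_assign[where C="{Neg (T i j)}"]) (auto simp: n)
  ultimately have "up_refutes ?G1" by (rule up_refutes.unit[rotated])
  moreover have "{Neg (X i)} \<in> ?G0" by (simp add: n)
  ultimately have "up_refutes ?G0" by (rule up_refutes.unit[rotated])
  then show ?thesis unfolding AT_def .
qed

lemma AT2:
  assumes "{Pos (X i), Pos (T i j)} \<in> G" "{Neg (X i), Pos (Y j), Pos (T i j)} \<in> G" "{Neg (X i), Neg (Y j), Pos (T i j)} \<in> G"
  shows "AT G {Pos (T i j)}"
proof -
  let ?G0 = "G \<union> neg_clause {Pos (T i j)}"
  have n: "neg_clause {Pos (T i j)} = {{Neg (T i j)}}"
    by (simp add: neg_clause_insert neg_clause_empty)
  let ?G1 = "assign_lit ?G0 (Neg (T i j))"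
  let ?G2 = "assign_lit ?G1 (Pos (X i))"
  let ?G3 = "assign_lit ?G2 (Pos (Y j))"
  have "{} \<in> ?G3"
  proof (rule mem_assign)
    show "{Neg (Y j)} \<in> ?G2"
    proof (rule mem_assign)
      show "{Neg (X i), Neg (Y j)} \<in> ?G1" by (rule mem_assign[where C="{Neg (X i), Neg (Y j), Pos (T i j)}"]) (use assms in auto)
    qed auto
  qed auto
  then have "up_refutes ?G3" by (rule up_refutes.empty)
  moreover have "{Pos (Y j)} \<in> ?G2"
  proof (rule mem_assign)
    show "{Neg (X i), Pos (Y j)} \<in> ?G1" by (rule mem_assign[where C="{Neg (X i), Pos (Y j), Pos (T i j)}"]) (use assms in auto)
  qed auto
  ultimately have "up_refutes ?G2" by (rule up_refutes.unit[rotated])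
  moreover have "{Pos (X i)} \<in> ?G1" by (rule mem_assign[where C="{Pos (X i), Pos (T i j)}"]) (use assms in auto)
  ultimately have "up_refutes ?G1" by (rule up_refutes.unit[rotated])
  moreover have "{Neg (T i j)} \<in> ?G0" by (simp add: n)
  ultimately have "up_refutes ?G0" by (rule up_refutes.unit[rotated])
  then show ?thesis unfolding AT_def .
qed

definition Acl :: "nat \<times> nat \<Rightarrow> eqvar clause" where
  "Acl = (\<lambda>(i,j). {Pos (X i), Pos (T i j)})"
definition Un1 :: "nat \<times> nat \<Rightarrow> eqvar clause" where
  "Un1 = (\<lambda>(i,j). {Pos (T i j)})"
definition Idx2 :: "nat \<Rightarrow> (nat \<times> nat) set" where
  "Idx2 n = {1..n} \<times> {1..n}"
definition F2 :: "nat \<Rightarrow> (nat \<times> nat) set \<Rightarrow> eqvar cnf" where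
  "F2 n P = F1 n (Idx n) \<union> Acl ` P \<union> Un1 ` P"

lemma phase2_step:
  assumes p: "p \<in> Idx2 n"
  shows "(qrat_step (eq2_prefix n) ^^ 2) (F2 n P) (F2 n (insert p P))"
proof -
  obtain i j where pd: "p = (i,j)" by (cases p) auto
  have ij: "i \<in> {1..n}" "j \<in> {1..n}" using p pd unfolding Idx2_def by auto
  let ?Q = "eq2_prefix n"
  have r: "red2 (i,j,a,b) \<in> F2 n P" for a b
  proof -
    have "(i,j,a,b) \<in> Idx n" using ij unfolding Idx_def by auto
    then have "red2 (i,j,a,b) \<in> red2 ` Idx n" by (rule imageI)
    then show ?thesis unfolding F2_def F1_def by blast
  qed
  have s1: "qrat_step ?Q (F2 n P) (F2 n P \<union> {Acl p})"
  proof (rule qrat_step.QRATA[OF _ _ disjI1])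
    show "AT (F2 n P) (Acl p)" unfolding Acl_def pd
      using AT1 r[of True True] r[of True False] by simp
  qed (use ij pd in \<open>auto simp: Acl_def prefix_vars_eq2\<close>)
  have s2: "qrat_step ?Q (F2 n P \<union> {Acl p}) (F2 n P \<union> {Acl p} \<union> {Un1 p})"
  proof (rule qrat_step.QRATA[OF _ _ disjI1])
    show "AT (F2 n P \<union> {Acl p}) (Un1 p)" unfolding Un1_def pd
      using AT2[of i j "F2 n P \<union> {Acl p}"] r[of False True] r[of False False] by (simp add: Acl_def pd)
  qed (use ij pd in \<open>auto simp: Un1_def prefix_vars_eq2\<close>)
  have e: "F2 n P \<union> {Acl p} \<union> {Un1 p} = F2 n (insert p P)" unfolding F2_def by auto
  have "(qrat_step ?Q ^^ Suc (Suc 0)) (F2 n P) (F2 n (insert p P))"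
    using s1 s2 e by (metis relpowp_Suc_I relpowp_0_I)
  then show ?thesis by (simp add: numeral_2_eq_2)
qed

lemma phase2:
  "finite P \<Longrightarrow> P \<subseteq> Idx2 n \<Longrightarrow> (qrat_step (eq2_prefix n) ^^ (2 * card P)) (F2 n {}) (F2 n P)"
proof (induction P rule: finite_induct)
  case empty
  then show ?case by simp
next
  case (insert q S)
  have "(qrat_step (eq2_prefix n) ^^ (2 * card S + 2)) (F2 n {}) (F2 n (insert q S))"
  proof -
    have "((qrat_step (eq2_prefix n) ^^ (2 * card S)) OO (qrat_step (eq2_prefix n) ^^ 2)) (F2 n {}) (F2 n (insert q S))"
      using insert phase2_step[of q n S] by auto
    then show ?thesis by (simp only: relpowp_add)
  qed
  then show ?case using insert by simp
qed

lemma final_step: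
  "qrat_step (eq2_prefix n) (F2 n (Idx2 n)) (F2 n (Idx2 n) \<union> {{}})"
proof (rule qrat_step.QRATA)
  let ?L = "(\<lambda>(i,j). Pos (T i j)) ` Idx2 n"
  have "up_refutes (F2 n (Idx2 n) \<union> neg_clause {})"
  proof (rule up_units)
    show "finite ?L" unfolding Idx2_def by simp
    show "\<forall>l\<in>?L. {l} \<in> F2 n (Idx2 n) \<union> neg_clause {}"
      unfolding F2_def Un1_def by force
    show "Big n \<in> F2 n (Idx2 n) \<union> neg_clause {}" unfolding F2_def F1_def by simp
    show "Big n \<subseteq> neg ` ?L" unfolding Big_def Idx2_def by force
    show "\<forall>l\<in>?L. neg l \<notin> ?L" by auto
  qed
  then show "AT (F2 n (Idx2 n)) {} \<or> (\<exists>l\<in>{}. is_exist (eq2_prefix n) (var l) \<and> qrat_lit (eq2_prefix n) (F2 n (Idx2 n)) {} l)"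
    unfolding AT_def by simp
qed auto


lemma relpowp_list:
  "(R ^^ k) F G \<Longrightarrow> \<exists>Fs. Fs \<noteq> [] \<and> hd Fs = F \<and> last Fs = G \<and> length Fs = Suc k \<and>
     (\<forall>i. Suc i < length Fs \<longrightarrow> R (Fs ! i) (Fs ! Suc i))"
proof (induction k arbitrary: G)
  case 0
  then show ?case by (intro exI[of _ "[F]"]) auto
next
  case (Suc k)
  then obtain H where H: "(R ^^ k) F H" "R H G" by auto
  from Suc.IH[OF H(1)] obtain Fs where Fs: "Fs \<noteq> []" "hd Fs = F" "last Fs = H" "length Fs = Suc k"
    "\<forall>i. Suc i < length Fs \<longrightarrow> R (Fs ! i) (Fs ! Suc i)" by blast
  show ?case
  proof (intro exI[of _ "Fs @ [G]"] conjI allI impI)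
    fix i assume i: "Suc i < length (Fs @ [G])"
    show "R ((Fs @ [G]) ! i) ((Fs @ [G]) ! Suc i)"
    proof (cases "Suc i < length Fs")
      case True
      then show ?thesis using Fs(5) by (simp add: nth_append)
    next
      case False
      then have "i = length Fs - 1" using i by simp
      then have "(Fs @ [G]) ! i = H" "(Fs @ [G]) ! Suc i = G"
        using Fs(1,3) by (simp_all add: nth_append last_conv_nth)
      then show ?thesis using H(2) by simp
    qed
  qed (use Fs in auto)
qed

lemma card_Idx: "card (Idx n) = n * n * 4"
proof -
  have "card (UNIV :: bool set) = 2" by (simp add: card_UNIV_bool)
  then show ?thesis unfolding Idx_def by (simp only: card_cartesian_product) simp
qed
lemma card_Idx2: "card (Idx2 n) = n * n"
  unfolding Idx2_def by (simp add: card_cartesian_product)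

theorem theorem8:
  shows "\<exists>c::nat. \<forall>n::nat. \<exists>Fs.
           qrat_refutation (eq2_prefix n) (eq2_matrix n) Fs \<and>
           refutation_size Fs \<le> c * n\<^sup>2"
proof (intro exI[of _ 11] allI)
  fix n :: nat
  let ?Q = "eq2_prefix n"
  show "\<exists>Fs. qrat_refutation ?Q (eq2_matrix n) Fs \<and> refutation_size Fs \<le> 11 * n\<^sup>2"
  proof (cases "n = 0")
    case True
    then have "{} \<in> eq2_matrix n" unfolding matrix_eq Big_def by simp
    then show ?thesis
      by (intro exI[of _ "[eq2_matrix n]"]) (simp add: qrat_refutation_def refutation_size_def)
  next
    case False
    have fin: "finite (Idx n)" "finite (Idx2 n)" unfolding Idx_def Idx2_def by simp_all
    have p1: "(qrat_step ?Q ^^ (2 * card (Idx n))) (eq2_matrix n) (F2 n {})"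
      using phase1[OF fin(1) subset_refl] unfolding F2_def by (simp add: F1_def matrix_eq)
    have p2: "(qrat_step ?Q ^^ (2 * card (Idx2 n))) (F2 n {}) (F2 n (Idx2 n))"
      using phase2[OF fin(2) subset_refl] .
    have "((qrat_step ?Q ^^ (2 * card (Idx n))) OO (qrat_step ?Q ^^ (2 * card (Idx2 n))))
        (eq2_matrix n) (F2 n (Idx2 n))" using p1 p2 by auto
    then have "(qrat_step ?Q ^^ (2 * card (Idx n) + 2 * card (Idx2 n))) (eq2_matrix n) (F2 n (Idx2 n))"
      by (simp only: relpowp_add)
    then have "(qrat_step ?Q ^^ Suc (2 * card (Idx n) + 2 * card (Idx2 n))) (eq2_matrix n) (F2 n (Idx2 n) \<union> {{}})"
      using final_step by (rule relpowp_Suc_I)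
    from relpowp_list[OF this] obtain Fs where Fs: "Fs \<noteq> []" "hd Fs = eq2_matrix n"
      "last Fs = F2 n (Idx2 n) \<union> {{}}" "length Fs = Suc (Suc (2 * card (Idx n) + 2 * card (Idx2 n)))"
      "\<forall>i. Suc i < length Fs \<longrightarrow> qrat_step ?Q (Fs ! i) (Fs ! Suc i)" by blast
    have "qrat_refutation ?Q (eq2_matrix n) Fs" unfolding qrat_refutation_def using Fs by auto
    moreover have "refutation_size Fs \<le> 11 * n\<^sup>2"
    proof -
      have "refutation_size Fs = 10 * (n * n) + 1"
        unfolding refutation_size_def using Fs(4) card_Idx card_Idx2 by simp
      also have "\<dots> \<le> 11 * n\<^sup>2" using False by (simp add: power2_eq_square)
      finally show ?thesis .
    qed
    ultimately show ?thesis by blast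
  qed
qed

end
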